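(* Let $\Lambda$ be a finite connected cubic graph admitting a group of automorphisms $G$ acting transitively on the $2$-arcs of $\Lambda$, and let $\Gamma=\mathrm{Dart}(\Lambda)$, with $G$ acting on $\Gamma$ naturally via $(u,v)\mapsto(u^g,v^g)$. Then $\Gamma$ is a tetravalent $G$-half-arc-transitive graph with $\mathrm{rad}_G(\Gamma)=3$ and $\mathrm{att}_G(\Gamma)=2$, and $\mathrm{Alt}_G(\Gamma)\cong\Lambda$. Moreover, the natural orientation of $\mathrm{Dart}(\Lambda)$ coincides with one of the two paired orientations of $\Gamma$ induced by the action of $G$.
   Context: All graphs are finite and simple. A $2$-arc is a walk $(x,y,z)$ with $x\ne z$. For a cubic graph $\Lambda$, the dart graph $\mathrm{Dart}(\Lambda)$ has as vertices the arcs (ordered pairs of adjacent vertices) of $\Lambda$, with $(u,v)$ adjacent to $(u',v')$ iff either $u'=v$ and $u\neq v'$, or $u=v'$ and $u'\neq v$; its natural orientation orients the edge $(u,v)(v,w)$ from $(u,v)$ to $(v,w)$. For a tetravalent graph $\Gamma$ and $G\le \mathrm{Aut}(\Gamma)$, $\Gamma$ is $G$-half-arc-transitive if $G$ acts transitively on vertices and edges but not on arcs; then the two $G$-orbits on arcs give two paired orientations of the edges, and each vertex is the tail of two and head of two incident edges. A $G$-alternating cycle is a cycle in which every two consecutive edges have a common head or a common tail. All have length $2\,\mathrm{rad}_G(\Gamma)$, and any two sharing a vertex meet in $\mathrm{att}_G(\Gamma)$ vertices. $\mathrm{Alt}_G(\Gamma)$ is the graph whose vertices are the $G$-alternating cycles,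 two adjacent iff they share a vertex. *)

theory Defs
  imports Main
begin

definition simple_graph :: "'a set \<Rightarrow> ('a \<Rightarrow> 'a \<Rightarrow> bool) \<Rightarrow> bool" where
  "simple_graph V E \<longleftrightarrow> finite V \<and>
     (\<forall>x y. E x y \<longrightarrow> x \<in> V \<and> y \<in> V \<and> x \<noteq> y \<and> E y x)"

definition regular_graph :: "'a set \<Rightarrow> ('a \<Rightarrow> 'a \<Rightarrow> bool) \<Rightarrow> nat \<Rightarrow> bool" where
  "regular_graph V E k \<longleftrightarrow> (\<forall>v\<in>V. card {w \<in> V. E v w} = k)"

definition connected_graph :: "'a set \<Rightarrow> ('a \<Rightarrow> 'a \<Rightarrow> bool) \<Rightarrow> bool" where
  "connected_graph V E \<longleftrightarrow> V \<noteq> {} \<and> (\<forall>x\<in>V. \<forall>y\<in>V. E\<^sup>*\<^sup>* x y)"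

definition graph_aut :: "'a set \<Rightarrow> ('a \<Rightarrow> 'a \<Rightarrow> bool) \<Rightarrow> ('a \<Rightarrow> 'a) \<Rightarrow> bool" where
  "graph_aut V E g \<longleftrightarrow> bij_betw g V V \<and> (\<forall>x\<in>V. \<forall>y\<in>V. E x y \<longleftrightarrow> E (g x) (g y))"

definition graph_iso :: "'a set \<Rightarrow> ('a \<Rightarrow> 'a \<Rightarrow> bool) \<Rightarrow> 'b set \<Rightarrow> ('b \<Rightarrow> 'b \<Rightarrow> bool) \<Rightarrow> bool" where
  "graph_iso V E W F \<longleftrightarrow> (\<exists>f. bij_betw f V W \<and> (\<forall>x\<in>V. \<forall>y\<in>V. E x y \<longleftrightarrow> F (f x) (f y)))"

text \<open>A group of automorphisms of (V,E), as a set of permutations of the vertex set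
  (functions are compared on V only, i.e. as permutations of V).\<close>

definition aut_group :: "'a set \<Rightarrow> ('a \<Rightarrow> 'a \<Rightarrow> bool) \<Rightarrow> ('a \<Rightarrow> 'a) set \<Rightarrow> bool" where
  "aut_group V E G \<longleftrightarrow> (\<forall>g\<in>G. graph_aut V E g) \<and> (\<exists>g\<in>G. \<forall>x\<in>V. g x = x) \<and>
     (\<forall>g\<in>G. \<forall>h\<in>G. \<exists>k\<in>G. \<forall>x\<in>V. k x = g (h x)) \<and>
     (\<forall>g\<in>G. \<exists>h\<in>G. \<forall>x\<in>V. h (g x) = x)"

definition two_arcs :: "('a \<Rightarrow> 'a \<Rightarrow> bool) \<Rightarrow> ('a \<times> 'a \<times> 'a) set" where
  "two_arcs E = {(x, y, z). E x y \<and> E y z \<and> x \<noteq> z}"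

definition two_arc_transitive :: "('a \<Rightarrow> 'a \<Rightarrow> bool) \<Rightarrow> ('a \<Rightarrow> 'a) set \<Rightarrow> bool" where
  "two_arc_transitive E G \<longleftrightarrow>
     (\<forall>(x, y, z)\<in>two_arcs E. \<forall>(x', y', z')\<in>two_arcs E.
        \<exists>g\<in>G. g x = x' \<and> g y = y' \<and> g z = z')"

definition darts :: "('a \<Rightarrow> 'a \<Rightarrow> bool) \<Rightarrow> ('a \<times> 'a) set" where
  "darts E = {(u, v). E u v}"

definition dart_adj :: "('a \<Rightarrow> 'a \<Rightarrow> bool) \<Rightarrow> 'a \<times> 'a \<Rightarrow> 'a \<times> 'a \<Rightarrow> bool" where
  "dart_adj E a b \<longleftrightarrow> a \<in> darts E \<and> b \<in> darts E \<and>
     ((fst b = snd a \<and> fst a \<noteq> snd b) \<or> (fst a = snd b \<and> fst b \<noteq> snd a))"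

definition natural_orientation :: "('a \<Rightarrow> 'a \<Rightarrow> bool) \<Rightarrow> (('a \<times> 'a) \<times> ('a \<times> 'a)) set" where
  "natural_orientation E = {(a, b). a \<in> darts E \<and> b \<in> darts E \<and> fst b = snd a \<and> fst a \<noteq> snd b}"

definition dart_act :: "('a \<Rightarrow> 'a) \<Rightarrow> 'a \<times> 'a \<Rightarrow> 'a \<times> 'a" where
  "dart_act g a = (g (fst a), g (snd a))"

definition arcs :: "('b \<Rightarrow> 'b \<Rightarrow> bool) \<Rightarrow> ('b \<times> 'b) set" where
  "arcs F = {(x, y). F x y}"

definition arc_orbit :: "('b \<Rightarrow> 'b) set \<Rightarrow> 'b \<times> 'b \<Rightarrow> ('b \<times> 'b) set" where
  "arc_orbit H a = {(h (fst a), h (snd a)) | h. h \<in> H}"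

definition half_arc_transitive :: "'b set \<Rightarrow> ('b \<Rightarrow> 'b \<Rightarrow> bool) \<Rightarrow> ('b \<Rightarrow> 'b) set \<Rightarrow> bool" where
  "half_arc_transitive W F H \<longleftrightarrow>
     (\<forall>h\<in>H. graph_aut W F h) \<and>
     (\<forall>x\<in>W. \<forall>y\<in>W. \<exists>h\<in>H. h x = y) \<and>
     (\<forall>x y x' y'. F x y \<longrightarrow> F x' y' \<longrightarrow> (\<exists>h\<in>H. {h x, h y} = {x', y'})) \<and>
     \<not> (\<forall>x y x' y'. F x y \<longrightarrow> F x' y' \<longrightarrow> (\<exists>h\<in>H. h x = x' \<and> h y = y'))"

text \<open>A cycle is represented by its set of (undirected) edges; consecutive edges
  v_{i-1}v_i and v_i v_{i+1} must have common head v_i or common tail v_i.\<close>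

definition alt_cycle :: "'b set \<Rightarrow> ('b \<Rightarrow> 'b \<Rightarrow> bool) \<Rightarrow> ('b \<times> 'b) set \<Rightarrow> 'b set set \<Rightarrow> bool" where
  "alt_cycle W F D C \<longleftrightarrow> (\<exists>vs. let n = length vs in
      distinct vs \<and> n \<ge> 3 \<and> set vs \<subseteq> W \<and>
      (\<forall>i<n. F (vs ! i) (vs ! ((i + 1) mod n))) \<and>
      (\<forall>i<n. let p = vs ! ((i + n - 1) mod n); c = vs ! i; s = vs ! ((i + 1) mod n) in
          ((p, c) \<in> D \<and> (s, c) \<in> D) \<or> ((c, p) \<in> D \<and> (c, s) \<in> D)) \<and>
      C = {{vs ! i, vs ! ((i + 1) mod n)} | i. i < n})"

definition cycle_verts :: "'b set set \<Rightarrow> 'b set" where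
  "cycle_verts C = \<Union>C"

definition has_radius :: "'b set \<Rightarrow> ('b \<Rightarrow> 'b \<Rightarrow> bool) \<Rightarrow> ('b \<times> 'b) set \<Rightarrow> nat \<Rightarrow> bool" where
  "has_radius W F D r \<longleftrightarrow> (\<exists>C. alt_cycle W F D C) \<and>
     (\<forall>C. alt_cycle W F D C \<longrightarrow> card C = 2 * r)"

definition has_attachment :: "'b set \<Rightarrow> ('b \<Rightarrow> 'b \<Rightarrow> bool) \<Rightarrow> ('b \<times> 'b) set \<Rightarrow> nat \<Rightarrow> bool" where
  "has_attachment W F D a \<longleftrightarrow>
     (\<forall>C1 C2. alt_cycle W F D C1 \<longrightarrow> alt_cycle W F D C2 \<longrightarrow> C1 \<noteq> C2 \<longrightarrow>
        cycle_verts C1 \<inter> cycle_verts C2 \<noteq> {} \<longrightarrow> card (cycle_verts C1 \<inter> cycle_verts C2) = a)"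

definition alt_vertices :: "'b set \<Rightarrow> ('b \<Rightarrow> 'b \<Rightarrow> bool) \<Rightarrow> ('b \<times> 'b) set \<Rightarrow> 'b set set set" where
  "alt_vertices W F D = {C. alt_cycle W F D C}"

definition alt_adj :: "'b set \<Rightarrow> ('b \<Rightarrow> 'b \<Rightarrow> bool) \<Rightarrow> ('b \<times> 'b) set \<Rightarrow> 'b set set \<Rightarrow> 'b set set \<Rightarrow> bool" where
  "alt_adj W F D C1 C2 \<longleftrightarrow> alt_cycle W F D C1 \<and> alt_cycle W F D C2 \<and> C1 \<noteq> C2 \<and>
     cycle_verts C1 \<inter> cycle_verts C2 \<noteq> {}"

end

theory Submission imports Defs begin

lemma lt6: "(i::nat) < 6 \<longleftrightarrow> i = 0 \<or> i = 1 \<or> i = 2 \<or> i = 3 \<or> i = 4 \<or> i = 5" by arith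
lemma all6: "(\<forall>i<(6::nat). P i) = (P 0 \<and> P 1 \<and> P 2 \<and> P 3 \<and> P 4 \<and> P 5)"
  unfolding lt6 by blast
lemma set6: "{f i | i. i < (6::nat)} = {f 0, f 1, f 2, f 3, f 4, f 5}"
  unfolding lt6 by blast

lemma nx_pv: "i < (n::nat) \<Longrightarrow> ((i+n-1) mod n + 1) mod n = i"
proof (cases i)
  case 0 assume "i < n" then show ?thesis using 0 by (cases n) auto
next
  case (Suc k) assume "i < n"
  then have "(i+n-1) mod n = k" using Suc by (simp add: mod_add_self2 )
  then show ?thesis using Suc \<open>i<n\<close> by simp
qed
lemma pv_suc: "i+1 < (n::nat) \<Longrightarrow> (i+1+n-1) mod n = i" by simp
lemma nx_suc: "i+1 < (n::nat) \<Longrightarrow> (i+1) mod n = i+1" by simp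
lemma pv_ne_nx: "3 \<le> (n::nat) \<Longrightarrow> i < n \<Longrightarrow> (i+n-1) mod n \<noteq> (i+1) mod n"
proof (cases i)
  case 0 assume "3 \<le> n" "i < n" then show ?thesis using 0 by simp
next
  case (Suc k) assume "3 \<le> n" "i < n"
  then have "(i+n-1) mod n = k" using Suc by simp
  moreover have "(i+1) mod n \<noteq> k"
  proof (cases "i+1 < n")
    case True then show ?thesis using Suc by simp
  next
    case False then have "i+1 = n" using \<open>i<n\<close> by simp
    then show ?thesis using Suc \<open>3 \<le> n\<close> by simp
  qed
  ultimately show ?thesis by simp
qed

lemma alt_conv1: "alt_cycle W F D C \<Longrightarrow> alt_cycle W F (converse D) C"
proof -
  assume "alt_cycle W F D C"
  then obtain vs where h: "distinct vs" "length vs \<ge> 3" "set vs \<subseteq> W"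
    "\<forall>i<length vs. F (vs ! i) (vs ! ((i + 1) mod length vs))"
    "\<forall>i<length vs. ((vs ! ((i + length vs - 1) mod length vs), vs ! i) \<in> D \<and> (vs ! ((i + 1) mod length vs), vs ! i) \<in> D) \<or> ((vs ! i, vs ! ((i + length vs - 1) mod length vs)) \<in> D \<and> (vs ! i, vs ! ((i + 1) mod length vs)) \<in> D)"
    "C = {{vs ! i, vs ! ((i + 1) mod length vs)} | i. i < length vs}"
    unfolding alt_cycle_def Let_def by blast
  have h5: "\<forall>i<length vs. ((vs ! ((i + length vs - 1) mod length vs), vs ! i) \<in> converse D \<and> (vs ! ((i + 1) mod length vs), vs ! i) \<in> converse D) \<or> ((vs ! i, vs ! ((i + length vs - 1) mod length vs)) \<in> converse D \<and> (vs ! i, vs ! ((i + 1) mod length vs)) \<in> converse D)"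
    using h(5) unfolding converse_iff by blast
  show ?thesis unfolding alt_cycle_def Let_def
    apply (rule exI[of _ vs])
    using h(1-4,6) h5 by blast
qed

lemma alt_conv: "alt_cycle W F (converse D) = alt_cycle W F D"
  using alt_conv1[of W F D] alt_conv1[of W F "converse D"] by auto

lemma conv_props:
  "has_radius W F (converse D) r = has_radius W F D r"
  "has_attachment W F (converse D) a = has_attachment W F D a"
  "alt_vertices W F (converse D) = alt_vertices W F D"
  "alt_adj W F (converse D) = alt_adj W F D"
  unfolding has_radius_def has_attachment_def alt_vertices_def alt_adj_def alt_conv by (rule refl)+

locale cubic =
  fixes V :: "'a set" and E :: "'a \<Rightarrow> 'a \<Rightarrow> bool"
  assumes sg: "simple_graph V E" and reg: "regular_graph V E 3"
begin

lemma EV: "E x y \<Longrightarrow> x \<in> V \<and> y \<in> V \<and> x \<noteq> y \<and> E y x"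
  using sg unfolding simple_graph_def by blast

lemma three: "v \<in> V \<Longrightarrow> \<exists>a b c. a \<noteq> b \<and> a \<noteq> c \<and> b \<noteq> c \<and> {w\<in>V. E v w} = {a,b,c}"
  using reg unfolding regular_graph_def card_3_iff by fastforce

lemma three': "v \<in> V \<Longrightarrow> \<exists>a b c. a \<noteq> b \<and> a \<noteq> c \<and> b \<noteq> c \<and> (\<forall>w. E v w \<longleftrightarrow> w \<in> {a,b,c})"
proof -
  assume "v \<in> V"
  then obtain a b c where "a \<noteq> b" "a \<noteq> c" "b \<noteq> c" "{w\<in>V. E v w} = {a,b,c}" using three by blast
  moreover have "\<forall>w. E v w \<longleftrightarrow> w \<in> {w\<in>V. E v w}" using EV by blast
  ultimately show ?thesis by blast
qed

lemma other_nbr: "v \<in> V \<Longrightarrow> \<exists>w. E v w \<and> w \<noteq> x \<and> w \<noteq> y"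
proof -
  assume "v \<in> V"
  then obtain a b c where abc: "a \<noteq> b" "a \<noteq> c" "b \<noteq> c" "\<forall>w. E v w \<longleftrightarrow> w \<in> {a,b,c}" using three' by blast
  then have "E v a" "E v b" "E v c" by auto
  then show ?thesis using abc(1-3) by metis
qed

lemma two_left: "E v u \<Longrightarrow> E v w \<Longrightarrow> E v w1 \<Longrightarrow> E v w2 \<Longrightarrow> w \<noteq> u \<Longrightarrow> w1 \<noteq> u \<Longrightarrow> w2 \<noteq> u
   \<Longrightarrow> w1 \<noteq> w2 \<Longrightarrow> w = w1 \<or> w = w2"
proof (rule ccontr)
  assume h: "E v u" "E v w" "E v w1" "E v w2" "w \<noteq> u" "w1 \<noteq> u" "w2 \<noteq> u" "w1 \<noteq> w2"
    and n: "\<not> (w = w1 \<or> w = w2)"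
  then have vV: "v \<in> V" using EV by blast
  have fin: "finite V" using sg unfolding simple_graph_def by blast
  have c3: "card {x\<in>V. E v x} = 3" using reg vV unfolding regular_graph_def by blast
  have uin: "u \<in> {x\<in>V. E v x}" using h EV by blast
  have c2: "card ({x\<in>V. E v x} - {u}) = 2" using c3 uin fin by (simp add: card_Diff_singleton)
  have sub: "{w,w1,w2} \<subseteq> {x\<in>V. E v x} - {u}" using h EV by blast
  have "card {w,w1,w2} = 3" using n h by simp
  moreover have "card {w,w1,w2} \<le> 2" using card_mono[OF _ sub] c2 fin by simp
  ultimately show False by simp
qed

abbreviation "D \<equiv> natural_orientation E"

definition hex :: "'a \<Rightarrow> ('a \<times> 'a) set set" where
  "hex v = {{a,b} | a b. (a,b) \<in> D \<and> snd a = v}"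

lemma D_iff: "((u,m),(m',w)) \<in> D \<longleftrightarrow> E u m \<and> E m' w \<and> m = m' \<and> u \<noteq> w"
  unfolding natural_orientation_def darts_def by auto

lemma D_antisym: "(x,y) \<in> D \<Longrightarrow> (y,x) \<notin> D"
  unfolding natural_orientation_def darts_def by auto

lemma hex_pairs: "hex v = {{(u,v),(v,w)} | u w. E u v \<and> E v w \<and> u \<noteq> w}"
  unfolding hex_def natural_orientation_def darts_def by force

lemma hex_explicit:
  assumes "a \<noteq> b" "a \<noteq> c" "b \<noteq> c" "\<forall>w. E v w \<longleftrightarrow> w \<in> {a,b,c}"
  shows "hex v = {{(a,v),(v,b)}, {(v,b),(c,v)}, {(c,v),(v,a)}, {(v,a),(b,v)}, {(b,v),(v,c)}, {(v,c),(a,v)}}"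
    (is "_ = ?R")
proof
  have E': "\<forall>w. E w v \<longleftrightarrow> w \<in> {a,b,c}" using assms(4) EV by blast
  show "hex v \<subseteq> ?R"
  proof
    fix x assume "x \<in> hex v"
    then obtain u w where x: "x = {(u,v),(v,w)}" "E u v" "E v w" "u \<noteq> w" unfolding hex_pairs by blast
    have "u \<in> {a,b,c}" "w \<in> {a,b,c}" using x E' assms(4) by blast+
    then show "x \<in> ?R" using x(1,4) by (elim insertE emptyE) (simp_all add: insert_commute)
  qed
  show "?R \<subseteq> hex v"
  proof -
    have "E a v" "E b v" "E c v" "E v a" "E v b" "E v c" using assms(4) E' by simp_all
    then show ?thesis unfolding hex_pairs using assms(1-3) by blast
  qed
qed

lemma hex_alt:
  assumes "v \<in> V"
  shows "alt_cycle (darts E) (dart_adj E) D (hex v)"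
proof -
  obtain a b c where abc: "a \<noteq> b" "a \<noteq> c" "b \<noteq> c" "\<forall>w. E v w \<longleftrightarrow> w \<in> {a,b,c}"
    using three'[OF assms] by blast
  have E': "\<forall>w. E w v \<longleftrightarrow> w \<in> {a,b,c}" using abc(4) EV by blast
  have Es: "E a v" "E b v" "E c v" "E v a" "E v b" "E v c" using abc(4) E' by simp_all
  have nv: "a \<noteq> v" "b \<noteq> v" "c \<noteq> v" using Es EV by auto
  define vs where "vs = [(a,v),(v,b),(c,v),(v,a),(b,v),(v,c)]"
  have len: "length vs = 6" unfolding vs_def by simp
  have d: "distinct vs" unfolding vs_def using abc nv by auto
  have s: "set vs \<subseteq> darts E" unfolding vs_def darts_def using Es by auto
  have ad: "\<forall>i<6. dart_adj E (vs ! i) (vs ! ((i + 1) mod 6))"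
    unfolding all6 vs_def dart_adj_def darts_def using Es abc nv by simp
  have al: "\<forall>i<6. let p = vs ! ((i + 6 - 1) mod 6); c = vs ! i; s = vs ! ((i + 1) mod 6) in
          ((p, c) \<in> D \<and> (s, c) \<in> D) \<or> ((c, p) \<in> D \<and> (c, s) \<in> D)"
    unfolding all6 vs_def Let_def using Es abc nv by (simp add: D_iff)
  have C: "hex v = {{vs ! i, vs ! ((i + 1) mod 6)} | i. i < 6}"
    unfolding set6 hex_explicit[OF abc] vs_def by simp
  show ?thesis
    unfolding alt_cycle_def
    apply (rule exI[of _ vs])
    unfolding len Let_def
    using d s ad al C by (simp add: Let_def)
qed

lemma D_struct: "(x,y) \<in> D \<Longrightarrow> \<exists>a m b. x = (a,m) \<and> y = (m,b) \<and> E a m \<and> E m b \<and> a \<noteq> b"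
  unfolding natural_orientation_def darts_def by auto

lemma D_link: "(x,y) \<in> D \<Longrightarrow> snd x = fst y"
  unfolding natural_orientation_def by auto

lemma hex_mem: "(x,y) \<in> D \<Longrightarrow> snd x = v \<Longrightarrow> {x,y} \<in> hex v"
  unfolding hex_def by blast

lemma alt_hex:
  assumes "alt_cycle (darts E) (dart_adj E) D C"
  shows "\<exists>v\<in>V. C = hex v"
proof -
  obtain vs where n3: "length vs \<ge> 3" and dist: "distinct vs" and sub: "set vs \<subseteq> darts E"
    and alt: "\<forall>i<length vs. ((vs!((i+length vs - 1) mod length vs), vs!i) \<in> D \<and> (vs!((i+1) mod length vs), vs!i) \<in> D) \<or> ((vs!i, vs!((i+length vs-1) mod length vs)) \<in> D \<and> (vs!i, vs!((i+1) mod length vs)) \<in> D)"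
    and C: "C = {{vs!i, vs!((i+1) mod length vs)} | i. i < length vs}"
    using assms unfolding alt_cycle_def Let_def by blast
  define n where "n = length vs"
  define nx where "nx i = (i+1) mod n" for i
  define pv where "pv i = (i+n-1) mod n" for i
  have n3': "n \<ge> 3" using n3 n_def by simp
  have alt': "\<And>i. i < n \<Longrightarrow> ((vs!(pv i), vs!i) \<in> D \<and> (vs!(nx i), vs!i) \<in> D) \<or> ((vs!i, vs!(pv i)) \<in> D \<and> (vs!i, vs!(nx i)) \<in> D)"
    using alt unfolding n_def nx_def pv_def by blast
  have C': "C = {{vs!i, vs!(nx i)} | i. i < n}" using C unfolding n_def nx_def by simp
  have nxlt: "\<And>i. nx i < n" using n3' unfolding nx_def by simp
  have pvlt: "\<And>i. pv i < n" using n3' unfolding pv_def by simp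
  have nxpv: "\<And>i. i < n \<Longrightarrow> nx (pv i) = i" unfolding nx_def pv_def using nx_pv by blast
  have pvne: "\<And>i. i < n \<Longrightarrow> vs!(pv i) \<noteq> vs!(nx i)"
  proof
    fix i assume lt: "i < n" and eq: "vs!(pv i) = vs!(nx i)"
    have "pv i \<noteq> nx i" using pv_ne_nx[OF n3' lt] unfolding nx_def pv_def .
    moreover have "pv i = nx i" using nth_eq_iff_index_eq[OF dist, of "pv i" "nx i"] eq pvlt nxlt n_def by simp
    ultimately show False by simp
  qed
  have dart: "\<And>i. i < n \<Longrightarrow> vs!i \<in> darts E" using sub n_def by auto
  have alt0: "(vs!(nx 0), vs!0) \<in> D \<or> (vs!0, vs!(nx 0)) \<in> D" using alt'[of 0] n3' by auto
  have "\<exists>v. (fst (vs!0) = v \<and> (vs!(nx 0), vs!0) \<in> D) \<or> (snd (vs!0) = v \<and> (vs!0, vs!(nx 0)) \<in> D)"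
  proof (cases "(vs!(nx 0), vs!0) \<in> D")
    case True then show ?thesis by blast
  next
    case False then show ?thesis using alt0 by blast
  qed
  then obtain v where v0: "(fst (vs!0) = v \<and> (vs!(nx 0), vs!0) \<in> D) \<or> (snd (vs!0) = v \<and> (vs!0, vs!(nx 0)) \<in> D)"
    by blast
  define Inv where "Inv i \<longleftrightarrow> (fst (vs!i) = v \<and> (vs!(nx i), vs!i) \<in> D) \<or> (snd (vs!i) = v \<and> (vs!i, vs!(nx i)) \<in> D)" for i
  have inv: "\<forall>i. i < n \<longrightarrow> Inv i"
  proof
    fix i show "i < n \<longrightarrow> Inv i"
    proof (induction i)
      case 0 show ?case using v0 Inv_def by blast
    next
      case (Suc i)
      show ?case
      proof
        assume lt: "Suc i < n"
        then have I: "Inv i" using Suc by simp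
        have nxi: "nx i = Suc i" using lt unfolding nx_def by simp
        have pvi: "pv (Suc i) = i" using lt unfolding pv_def by simp
        from I show "Inv (Suc i)" unfolding Inv_def
        proof
          assume a: "fst (vs!i) = v \<and> (vs!(nx i), vs!i) \<in> D"
          then have "snd (vs!(Suc i)) = v" using D_link nxi by fastforce
          moreover have "(vs!(Suc i), vs!(nx (Suc i))) \<in> D"
          proof -
            have r: "(vs!(Suc i), vs!i) \<in> D" using a nxi by simp
            have "(vs!i, vs!(Suc i)) \<notin> D" using D_antisym[OF r] .
            then show ?thesis using alt'[OF lt] pvi by auto
          qed
          ultimately show "(fst (vs!(Suc i)) = v \<and> (vs!(nx (Suc i)), vs!(Suc i)) \<in> D) \<or> (snd (vs!(Suc i)) = v \<and> (vs!(Suc i), vs!(nx (Suc i))) \<in> D)" by blast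
        next
          assume a: "snd (vs!i) = v \<and> (vs!i, vs!(nx i)) \<in> D"
          then have "fst (vs!(Suc i)) = v" using D_link nxi by fastforce
          moreover have "(vs!(nx (Suc i)), vs!(Suc i)) \<in> D"
          proof -
            have r: "(vs!i, vs!(Suc i)) \<in> D" using a nxi by simp
            have "(vs!(Suc i), vs!i) \<notin> D" using D_antisym[OF r] .
            then show ?thesis using alt'[OF lt] pvi by auto
          qed
          ultimately show "(fst (vs!(Suc i)) = v \<and> (vs!(nx (Suc i)), vs!(Suc i)) \<in> D) \<or> (snd (vs!(Suc i)) = v \<and> (vs!(Suc i), vs!(nx (Suc i))) \<in> D)" by blast
        qed
      qed
    qed
  qed
  have edge: "\<And>i. i < n \<Longrightarrow> {vs!i, vs!(nx i)} \<in> hex v"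
  proof -
    fix i assume "i < n"
    then have "Inv i" using inv by blast
    then show "{vs!i, vs!(nx i)} \<in> hex v" unfolding Inv_def
    proof
      assume a: "fst (vs!i) = v \<and> (vs!(nx i), vs!i) \<in> D"
      then have "snd (vs!(nx i)) = v" using D_link by fastforce
      then have "{vs!(nx i), vs!i} \<in> hex v" using hex_mem a by blast
      then show ?thesis by (simp add: insert_commute)
    next
      assume a: "snd (vs!i) = v \<and> (vs!i, vs!(nx i)) \<in> D"
      then show ?thesis using hex_mem by blast
    qed
  qed
  have vV: "v \<in> V"
  proof -
    have "vs!0 \<in> darts E" using dart n3' by simp
    then have "E (fst (vs!0)) (snd (vs!0))" unfolding darts_def by auto
    then have "fst (vs!0) \<in> V" "snd (vs!0) \<in> V" using EV by blast+
    then show ?thesis using v0 by blast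
  qed
  have nb: "\<And>i q. i < n \<Longrightarrow> {vs!i, q} \<in> hex v \<Longrightarrow> q = vs!(pv i) \<or> q = vs!(nx i)"
  proof -
    fix i q assume lt: "i < n" and hq: "{vs!i, q} \<in> hex v"
    obtain x y where xy: "{vs!i, q} = {x,y}" "(x,y) \<in> D" "snd x = v" using hq unfolding hex_def by blast
    have dd: "E (fst (vs!i)) (snd (vs!i))" using dart[OF lt] unfolding darts_def by auto
    have "Inv i" using inv lt by blast
    then show "q = vs!(pv i) \<or> q = vs!(nx i)" unfolding Inv_def
    proof
      assume a: "fst (vs!i) = v \<and> (vs!(nx i), vs!i) \<in> D"
      then have b: "(vs!(pv i), vs!i) \<in> D" using alt'[OF lt] D_antisym by blast
      obtain w where vi: "vs!i = (v,w)" using a by (metis prod.collapse)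
      obtain u1 where u1: "vs!(nx i) = (u1,v)" "E u1 v" "u1 \<noteq> w"
        using D_struct[OF conjunct2[OF a]] vi by auto
      obtain u2 where u2: "vs!(pv i) = (u2,v)" "E u2 v" "u2 \<noteq> w"
        using D_struct[OF b] vi by auto
      have "x = q \<and> y = vs!i"
      proof (rule ccontr)
        assume "\<not> (x = q \<and> y = vs!i)"
        then have "x = vs!i" using xy(1) by (auto simp: doubleton_eq_iff)
        then show False using xy(3) vi dd EV by auto
      qed
      then obtain u where u: "q = (u,v)" "E u v" "u \<noteq> w" using D_struct xy(2) vi by fastforce
      have "u = u1 \<or> u = u2"
        using two_left[of v w u u1 u2] u u1 u2 pvne[OF lt] dd vi EV by auto
      then show ?thesis using u u1 u2 by auto
    next
      assume a: "snd (vs!i) = v \<and> (vs!i, vs!(nx i)) \<in> D"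
      then have b: "(vs!i, vs!(pv i)) \<in> D" using alt'[OF lt] D_antisym by blast
      obtain u where vi: "vs!i = (u,v)" using a by (metis prod.collapse)
      obtain w1 where w1: "vs!(nx i) = (v,w1)" "E v w1" "w1 \<noteq> u"
        using D_struct[OF conjunct2[OF a]] vi by auto
      obtain w2 where w2: "vs!(pv i) = (v,w2)" "E v w2" "w2 \<noteq> u"
        using D_struct[OF b] vi by auto
      have "x = vs!i \<and> y = q"
      proof (rule ccontr)
        assume "\<not> (x = vs!i \<and> y = q)"
        then have "x = q" "y = vs!i" using xy(1) by (auto simp: doubleton_eq_iff)
        then have "fst (vs!i) = v" using xy D_link by metis
        then show False using vi dd EV by auto
      qed
      then obtain w where w: "q = (v,w)" "E v w" "w \<noteq> u" using D_struct xy(2) vi by fastforce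
      have "w = w1 \<or> w = w2"
        using two_left[of v u w w1 w2] w w1 w2 pvne[OF lt] dd vi EV by auto
      then show ?thesis using w w1 w2 by auto
    qed
  qed
  define S where "S = set vs"
  have cl: "\<And>x q. x \<in> S \<Longrightarrow> {x,q} \<in> hex v \<Longrightarrow> q \<in> S"
  proof -
    fix x q assume "x \<in> S" "{x,q} \<in> hex v"
    then obtain i where i: "i < n" "x = vs!i" unfolding S_def n_def by (auto simp: in_set_conv_nth)
    then have "q = vs!(pv i) \<or> q = vs!(nx i)" using nb \<open>{x,q} \<in> hex v\<close> by blast
    then show "q \<in> S" using pvlt nxlt unfolding S_def n_def by auto
  qed
  have hp: "\<And>u w. E u v \<Longrightarrow> E v w \<Longrightarrow> u \<noteq> w \<Longrightarrow> {(u,v),(v,w)} \<in> hex v"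
    unfolding hex_pairs by blast
  have Tall: "\<And>u0. E u0 v \<Longrightarrow> (u0,v) \<in> S \<Longrightarrow> \<forall>u. E u v \<longrightarrow> (u,v) \<in> S"
  proof (intro allI impI)
    fix u0 u assume h0: "E u0 v" "(u0,v) \<in> S" and hu: "E u v"
    have H: "\<And>w. E v w \<Longrightarrow> w \<noteq> u0 \<Longrightarrow> (v,w) \<in> S"
    proof -
      fix w assume "E v w" "w \<noteq> u0"
      then have "{(u0,v),(v,w)} \<in> hex v" using hp h0(1) by simp
      then show "(v,w) \<in> S" using cl[OF h0(2)] by simp
    qed
    show "(u,v) \<in> S"
    proof (cases "u = u0")
      case True then show ?thesis using h0 by simp
    next
      case False
      obtain w where w: "E v w" "w \<noteq> u0" "w \<noteq> u" using other_nbr[OF vV, of u0 u] by blast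
      have wS: "(v,w) \<in> S" using H w(1,2) by simp
      have "{(u,v),(v,w)} \<in> hex v" using hp[OF hu w(1)] w(3) by simp
      then have "{(v,w),(u,v)} \<in> hex v" by (simp add: insert_commute)
      then show ?thesis using cl[OF wS] by simp
    qed
  qed
  have allT: "\<forall>u. E u v \<longrightarrow> (u,v) \<in> S"
  proof -
    have s0: "vs!0 \<in> S" using n3' unfolding S_def n_def by (intro nth_mem) linarith
    have "vs!0 \<in> darts E" using dart n3' by simp
    then have dd: "E (fst (vs!0)) (snd (vs!0))" unfolding darts_def by auto
    from v0 show ?thesis
    proof
      assume a: "fst (vs!0) = v \<and> (vs!(nx 0), vs!0) \<in> D"
      define w0 where "w0 = snd (vs!0)"
      have w0: "vs!0 = (v,w0)" "E v w0" using a dd unfolding w0_def by (simp_all add: prod_eq_iff)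
      obtain u0 where u0: "E v u0" "u0 \<noteq> w0" using other_nbr[OF vV, of w0 w0] by blast
      have Eu0: "E u0 v" using u0(1) EV by blast
      have "{(u0,v),(v,w0)} \<in> hex v" using hp[OF Eu0 w0(2) u0(2)] .
      then have "{(v,w0),(u0,v)} \<in> hex v" by (simp add: insert_commute)
      then have "(u0,v) \<in> S" using cl s0 w0(1) by simp
      then show ?thesis using Tall[OF Eu0] by blast
    next
      assume a: "snd (vs!0) = v \<and> (vs!0, vs!(nx 0)) \<in> D"
      define u0 where "u0 = fst (vs!0)"
      have u0: "vs!0 = (u0,v)" "E u0 v" using a dd unfolding u0_def by (simp_all add: prod_eq_iff)
      then show ?thesis using Tall s0 by simp
    qed
  qed
  have "hex v \<subseteq> C"
  proof
    fix e assume "e \<in> hex v"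
    then obtain u w where e: "e = {(u,v),(v,w)}" "E u v" "E v w" "u \<noteq> w" unfolding hex_pairs by blast
    have "(u,v) \<in> S" using allT e by blast
    then obtain i where i: "i < n" "(u,v) = vs!i" unfolding S_def n_def by (auto simp: in_set_conv_nth)
    have "{vs!i, (v,w)} \<in> hex v" using \<open>e \<in> hex v\<close> e(1) i(2) by simp
    then have "(v,w) = vs!(pv i) \<or> (v,w) = vs!(nx i)" using nb[OF i(1)] by simp
    then show "e \<in> C"
    proof
      assume "(v,w) = vs!(pv i)"
      then have "e = {vs!(pv i), vs!(nx (pv i))}" using e(1) i nxpv by (simp add: insert_commute)
      then show ?thesis using C' pvlt by blast
    next
      assume "(v,w) = vs!(nx i)"
      then have "e = {vs!i, vs!(nx i)}" using e(1) i by simp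
      then show ?thesis using C' i by blast
    qed
  qed
  moreover have "C \<subseteq> hex v" using C' edge by blast
  ultimately show ?thesis using vV by blast
qed

lemma alt_iff: "alt_cycle (darts E) (dart_adj E) D C \<longleftrightarrow> (\<exists>v\<in>V. C = hex v)"
  using alt_hex hex_alt by blast

lemma card_hex: "v \<in> V \<Longrightarrow> card (hex v) = 6"
proof -
  assume "v \<in> V"
  then obtain a b c where abc: "a \<noteq> b" "a \<noteq> c" "b \<noteq> c" "\<forall>w. E v w \<longleftrightarrow> w \<in> {a,b,c}"
    using three' by blast
  have E': "\<forall>w. E w v \<longleftrightarrow> w \<in> {a,b,c}" using abc(4) EV by blast
  have Es: "E a v" "E b v" "E c v" "E v a" "E v b" "E v c" using abc(4) E' by simp_all
  have nv: "a \<noteq> v" "b \<noteq> v" "c \<noteq> v" using Es EV by auto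
  show ?thesis unfolding hex_explicit[OF abc] using abc(1-3) nv
    by (simp add: doubleton_eq_iff)
qed

lemma cv_hex: "v \<in> V \<Longrightarrow> cycle_verts (hex v) = {p \<in> darts E. fst p = v \<or> snd p = v}"
proof -
  assume "v \<in> V"
  then obtain a b c where abc: "a \<noteq> b" "a \<noteq> c" "b \<noteq> c" "\<forall>w. E v w \<longleftrightarrow> w \<in> {a,b,c}"
    using three' by blast
  have E': "\<forall>w. E w v \<longleftrightarrow> w \<in> {a,b,c}" using abc(4) EV by blast
  have Es: "E a v" "E b v" "E c v" "E v a" "E v b" "E v c" using abc(4) E' by simp_all
  have L: "cycle_verts (hex v) = {(a,v),(v,b),(c,v),(v,a),(b,v),(v,c)}"
    unfolding hex_explicit[OF abc] cycle_verts_def by auto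
  have R: "{p \<in> darts E. fst p = v \<or> snd p = v} = {(a,v),(v,b),(c,v),(v,a),(b,v),(v,c)}"
  proof
    show "{p \<in> darts E. fst p = v \<or> snd p = v} \<subseteq> {(a,v),(v,b),(c,v),(v,a),(b,v),(v,c)}"
    proof
      fix p assume "p \<in> {p \<in> darts E. fst p = v \<or> snd p = v}"
      then obtain x y where p: "p = (x,y)" "E x y" "x = v \<or> y = v" unfolding darts_def by auto
      then show "p \<in> {(a,v),(v,b),(c,v),(v,a),(b,v),(v,c)}"
      proof (cases "x = v")
        case True then have "y \<in> {a,b,c}" using p abc(4) by simp
        then show ?thesis using p True by auto
      next
        case False then have "y = v" using p by simp
        then have "x \<in> {a,b,c}" using p E' by simp
        then show ?thesis using p \<open>y = v\<close> by auto
      qed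
    qed
    show "{(a,v),(v,b),(c,v),(v,a),(b,v),(v,c)} \<subseteq> {p \<in> darts E. fst p = v \<or> snd p = v}"
      using Es unfolding darts_def by auto
  qed
  show ?thesis using L R by simp
qed

lemma inter_hex: "v \<in> V \<Longrightarrow> v' \<in> V \<Longrightarrow> v \<noteq> v' \<Longrightarrow>
   cycle_verts (hex v) \<inter> cycle_verts (hex v') = (if E v v' then {(v,v'),(v',v)} else {})"
  unfolding cv_hex by (auto simp: darts_def dest: EV)

lemma hex_inj: "inj_on hex V"
proof
  fix v v' assume vV: "v \<in> V" and v'V: "v' \<in> V" and eq: "hex v = hex v'"
  show "v = v'"
  proof (rule ccontr)
    assume ne: "v \<noteq> v'"
    obtain a where a: "E v a" "a \<noteq> v'" using other_nbr[OF vV, of v' v'] by blast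
    have "(v,a) \<in> cycle_verts (hex v)" using cv_hex[OF vV] a unfolding darts_def by auto
    then have "(v,a) \<in> cycle_verts (hex v')" using eq by simp
    then show False using cv_hex[OF v'V] ne a by auto
  qed
qed

lemma card_N2: "E v u \<Longrightarrow> card ({y\<in>V. E v y} - {u}) = 2"
proof -
  assume h: "E v u"
  then have vV: "v \<in> V" and "u \<in> {y\<in>V. E v y}" using EV by auto
  moreover have "finite V" using sg unfolding simple_graph_def by blast
  moreover have "card {y\<in>V. E v y} = 3" using reg vV unfolding regular_graph_def by blast
  ultimately show ?thesis by (simp add: card_Diff_singleton)
qed

lemma reg4: "regular_graph (darts E) (dart_adj E) 4"
  unfolding regular_graph_def
proof
  fix x assume "x \<in> darts E"
  then obtain u v where x: "x = (u,v)" "E u v" unfolding darts_def by auto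
  have eq: "{w \<in> darts E. dart_adj E x w} = Pair v ` ({y\<in>V. E v y} - {u}) \<union> (\<lambda>z. (z,u)) ` ({y\<in>V. E u y} - {v})"
  proof
    show "{w \<in> darts E. dart_adj E x w} \<subseteq> Pair v ` ({y\<in>V. E v y} - {u}) \<union> (\<lambda>z. (z,u)) ` ({y\<in>V. E u y} - {v})"
      using x unfolding dart_adj_def darts_def by (auto dest: EV)
    show "Pair v ` ({y\<in>V. E v y} - {u}) \<union> (\<lambda>z. (z,u)) ` ({y\<in>V. E u y} - {v}) \<subseteq> {w \<in> darts E. dart_adj E x w}"
      using x unfolding dart_adj_def darts_def by (auto dest: EV)
  qed
  have c1: "card (Pair v ` ({y\<in>V. E v y} - {u})) = 2"
    using card_N2[of v u] x EV by (simp add: card_image inj_on_def)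
  have c2: "card ((\<lambda>z. (z,u)) ` ({y\<in>V. E u y} - {v})) = 2"
    using card_N2[of u v] x by (simp add: card_image inj_on_def)
  have fin: "finite V" using sg unfolding simple_graph_def by blast
  have disj: "Pair v ` ({y\<in>V. E v y} - {u}) \<inter> (\<lambda>z. (z,u)) ` ({y\<in>V. E u y} - {v}) = {}" by auto
  show "card {w \<in> darts E. dart_adj E x w} = 4"
    unfolding eq using card_Un_disjoint[OF _ _ disj] c1 c2 fin by simp
qed

lemma radius: "V \<noteq> {} \<Longrightarrow> has_radius (darts E) (dart_adj E) D 3"
  unfolding has_radius_def alt_iff using card_hex by auto

lemma attach: "has_attachment (darts E) (dart_adj E) D 2"
  unfolding has_attachment_def alt_iff
proof (intro allI impI)
  fix C1 C2 assume "\<exists>v\<in>V. C1 = hex v" "\<exists>v\<in>V. C2 = hex v" "C1 \<noteq> C2"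
    and ne: "cycle_verts C1 \<inter> cycle_verts C2 \<noteq> {}"
  then obtain v v' where vv: "v \<in> V" "v' \<in> V" "C1 = hex v" "C2 = hex v'" "v \<noteq> v'" by blast
  then have "E v v'" using ne inter_hex[of v v'] by (auto split: if_splits)
  then show "card (cycle_verts C1 \<inter> cycle_verts C2) = 2"
    using inter_hex[of v v'] vv by (auto dest: EV)
qed

lemma iso: "graph_iso (alt_vertices (darts E) (dart_adj E) D) (alt_adj (darts E) (dart_adj E) D) V E"
proof -
  have AV: "alt_vertices (darts E) (dart_adj E) D = hex ` V"
    unfolding alt_vertices_def alt_iff by auto
  have b: "bij_betw (inv_into V hex) (hex ` V) V"
    using bij_betw_inv_into[of hex V "hex ` V"] hex_inj by (simp add: bij_betw_def)
  have adj: "\<forall>x\<in>hex ` V. \<forall>y\<in>hex ` V. alt_adj (darts E) (dart_adj E) D x y \<longleftrightarrow> E (inv_into V hex x) (inv_into V hex y)"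
  proof (intro ballI)
    fix x y assume "x \<in> hex ` V" "y \<in> hex ` V"
    then obtain v v' where vv: "v \<in> V" "v' \<in> V" "x = hex v" "y = hex v'" by blast
    have i: "inv_into V hex x = v" "inv_into V hex y = v'" using vv hex_inj by (simp_all add: inv_into_f_f)
    have "alt_adj (darts E) (dart_adj E) D x y \<longleftrightarrow> v \<noteq> v' \<and> E v v'"
      unfolding alt_adj_def alt_iff using vv inter_hex[of v v'] hex_inj
      by (auto simp: inj_on_eq_iff split: if_splits)
    also have "\<dots> \<longleftrightarrow> E v v'" using EV by blast
    finally show "alt_adj (darts E) (dart_adj E) D x y \<longleftrightarrow> E (inv_into V hex x) (inv_into V hex y)" using i by simp
  qed
  show ?thesis unfolding graph_iso_def AV using b adj by blast
qed

lemma D_exists: "V \<noteq> {} \<Longrightarrow> \<exists>x y. (x,y) \<in> D"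
proof -
  assume "V \<noteq> {}"
  then obtain v where vV: "v \<in> V" by blast
  then obtain a b c where abc: "a \<noteq> b" "a \<noteq> c" "b \<noteq> c" "\<forall>w. E v w \<longleftrightarrow> w \<in> {a,b,c}"
    using three' by blast
  have "E v a" "E v b" using abc(4) by simp_all
  then have "((a,v),(v,b)) \<in> D" using abc(1) EV unfolding D_iff by blast
  then show ?thesis by blast
qed

lemma D_adj: "(x,y) \<in> D \<Longrightarrow> dart_adj E x y \<and> dart_adj E y x"
  unfolding natural_orientation_def dart_adj_def by auto

lemma adj_D: "dart_adj E x y \<Longrightarrow> (x,y) \<in> D \<or> (y,x) \<in> D"
  unfolding natural_orientation_def dart_adj_def by auto

end

locale cubic_grp = cubic +
  fixes G :: "('a \<Rightarrow> 'a) set"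
  assumes aut: "aut_group V E G" and tat: "two_arc_transitive E G"
begin

lemma gaut: "g \<in> G \<Longrightarrow> graph_aut V E g"
  using aut unfolding aut_group_def by blast

lemma gE: "g \<in> G \<Longrightarrow> E x y \<Longrightarrow> E (g x) (g y)"
  using gaut EV unfolding graph_aut_def by blast

lemma ginj: "g \<in> G \<Longrightarrow> x \<in> V \<Longrightarrow> y \<in> V \<Longrightarrow> g x = g y \<longleftrightarrow> x = y"
  using gaut unfolding graph_aut_def bij_betw_def inj_on_def by blast

lemma Dpres: "(x,y) \<in> D \<Longrightarrow> g \<in> G \<Longrightarrow> (dart_act g x, dart_act g y) \<in> D"
proof -
  assume xy: "(x,y) \<in> D" and g: "g \<in> G"
  obtain a m b where h: "x = (a,m)" "y = (m,b)" "E a m" "E m b" "a \<noteq> b" using D_struct[OF xy] by blast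
  have "g a \<noteq> g b" using ginj[OF g, of a b] h EV by blast
  then show ?thesis using h gE[OF g] unfolding dart_act_def D_iff by simp
qed

lemma Dtrans: "(x,y) \<in> D \<Longrightarrow> (x',y') \<in> D \<Longrightarrow> \<exists>g\<in>G. dart_act g x = x' \<and> dart_act g y = y'"
proof -
  assume xy: "(x,y) \<in> D" and xy': "(x',y') \<in> D"
  obtain a m b where h: "x = (a,m)" "y = (m,b)" "E a m" "E m b" "a \<noteq> b" using D_struct[OF xy] by blast
  obtain a' m' b' where h': "x' = (a',m')" "y' = (m',b')" "E a' m'" "E m' b'" "a' \<noteq> b'" using D_struct[OF xy'] by blast
  have "(a,m,b) \<in> two_arcs E" "(a',m',b') \<in> two_arcs E" using h h' unfolding two_arcs_def by auto
  then obtain g where "g \<in> G" "g a = a'" "g m = m'" "g b = b'" using tat unfolding two_arc_transitive_def by fastforce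
  then show ?thesis using h h' unfolding dart_act_def by auto
qed

lemma orbit: "(x,y) \<in> D \<Longrightarrow> arc_orbit (dart_act ` G) (x,y) = D"
proof
  assume xy: "(x,y) \<in> D"
  show "arc_orbit (dart_act ` G) (x,y) \<subseteq> D"
    unfolding arc_orbit_def using Dpres[OF xy] by auto
  show "D \<subseteq> arc_orbit (dart_act ` G) (x,y)"
  proof
    fix p assume p: "p \<in> D"
    obtain x' y' where pe: "p = (x',y')" by (cases p)
    obtain g where "g \<in> G" "dart_act g x = x'" "dart_act g y = y'" using Dtrans[OF xy] p pe by blast
    then show "p \<in> arc_orbit (dart_act ` G) (x,y)" unfolding arc_orbit_def pe by auto
  qed
qed

lemma orbit_rev: "(y,x) \<in> D \<Longrightarrow> arc_orbit (dart_act ` G) (x,y) = converse D"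
proof -
  assume yx: "(y,x) \<in> D"
  have "arc_orbit (dart_act ` G) (x,y) = converse (arc_orbit (dart_act ` G) (y,x))"
    unfolding arc_orbit_def by auto
  then show ?thesis using orbit[OF yx] by simp
qed

lemma orbit_cases: "a \<in> arcs (dart_adj E) \<Longrightarrow> arc_orbit (dart_act ` G) a = D \<or> arc_orbit (dart_act ` G) a = converse D"
proof -
  assume "a \<in> arcs (dart_adj E)"
  then obtain x y where a: "a = (x,y)" "dart_adj E x y" unfolding arcs_def by auto
  then show ?thesis using adj_D orbit orbit_rev by blast
qed

lemma dart_aut: "g \<in> G \<Longrightarrow> graph_aut (darts E) (dart_adj E) (dart_act g)"
proof -
  assume g: "g \<in> G"
  have gb: "bij_betw g V V" using gaut[OF g] unfolding graph_aut_def by blast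
  have gEi: "\<forall>x\<in>V. \<forall>y\<in>V. E x y \<longleftrightarrow> E (g x) (g y)" using gaut[OF g] unfolding graph_aut_def by blast
  have mem: "\<And>p. p \<in> darts E \<Longrightarrow> dart_act g p \<in> darts E"
    unfolding darts_def dart_act_def using gE[OF g] by auto
  have inj: "inj_on (dart_act g) (darts E)"
  proof
    fix p q assume "p \<in> darts E" "q \<in> darts E" "dart_act g p = dart_act g q"
    then show "p = q" unfolding darts_def dart_act_def using ginj[OF g] EV by (auto simp: prod_eq_iff)
  qed
  have surj: "darts E \<subseteq> dart_act g ` darts E"
  proof
    fix p assume "p \<in> darts E"
    then obtain u' v' where p: "p = (u',v')" "E u' v'" unfolding darts_def by auto
    then have "u' \<in> g ` V" "v' \<in> g ` V" using gb EV unfolding bij_betw_def by auto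
    then obtain u v where uv: "u \<in> V" "v \<in> V" "g u = u'" "g v = v'" by blast
    then have "E u v" using gEi p by blast
    then show "p \<in> dart_act g ` darts E" using uv p unfolding darts_def dart_act_def by force
  qed
  have bij: "bij_betw (dart_act g) (darts E) (darts E)"
    using inj surj mem unfolding bij_betw_def by blast
  have adj: "\<forall>x\<in>darts E. \<forall>y\<in>darts E. dart_adj E x y \<longleftrightarrow> dart_adj E (dart_act g x) (dart_act g y)"
  proof (intro ballI)
    fix x y assume x: "x \<in> darts E" and y: "y \<in> darts E"
    obtain a b c d where xy: "x = (a,b)" "y = (c,d)" "E a b" "E c d" using x y unfolding darts_def by auto
    then have V4: "a \<in> V" "b \<in> V" "c \<in> V" "d \<in> V" using EV by auto
    show "dart_adj E x y \<longleftrightarrow> dart_adj E (dart_act g x) (dart_act g y)"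
      unfolding dart_adj_def using x y mem xy V4 ginj[OF g] by (auto simp: dart_act_def)
  qed
  show ?thesis unfolding graph_aut_def using bij adj by blast
qed

lemma half: "V \<noteq> {} \<Longrightarrow> half_arc_transitive (darts E) (dart_adj E) (dart_act ` G)"
  unfolding half_arc_transitive_def
proof (intro conjI)
  assume Vne: "V \<noteq> {}"
  show "\<forall>h\<in>dart_act ` G. graph_aut (darts E) (dart_adj E) h" using dart_aut by blast
  show "\<forall>x\<in>darts E. \<forall>y\<in>darts E. \<exists>h\<in>dart_act ` G. h x = y"
  proof (intro ballI)
    fix x y assume "x \<in> darts E" "y \<in> darts E"
    then obtain u v u' v' where xy: "x = (u,v)" "y = (u',v')" "E u v" "E u' v'" unfolding darts_def by auto
    obtain w where w: "E v w" "w \<noteq> u" using other_nbr[of v u u] xy EV by blast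
    obtain w' where w': "E v' w'" "w' \<noteq> u'" using other_nbr[of v' u' u'] xy EV by blast
    have d1: "((u,v),(v,w)) \<in> D" using xy w unfolding D_iff by auto
    have d2: "((u',v'),(v',w')) \<in> D" using xy w' unfolding D_iff by auto
    obtain g where g: "g \<in> G" "dart_act g (u,v) = (u',v')" using Dtrans[OF d1 d2] by blast
    have "dart_act g x = y" using g xy by simp
    then show "\<exists>h\<in>dart_act ` G. h x = y" using g(1) by blast
  qed
  show "\<forall>x y x' y'. dart_adj E x y \<longrightarrow> dart_adj E x' y' \<longrightarrow> (\<exists>h\<in>dart_act ` G. {h x, h y} = {x', y'})"
  proof (intro allI impI)
    fix x y x' y' assume a: "dart_adj E x y" "dart_adj E x' y'"
    have c1: "(x,y) \<in> D \<or> (y,x) \<in> D" using adj_D a(1) by blast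
    have c2: "(x',y') \<in> D \<or> (y',x') \<in> D" using adj_D a(2) by blast
    from c1 c2 show "\<exists>h\<in>dart_act ` G. {h x, h y} = {x', y'}"
    proof (elim disjE)
      assume d: "(x,y) \<in> D" "(x',y') \<in> D"
      obtain g where g: "g \<in> G" "dart_act g x = x'" "dart_act g y = y'" using Dtrans[OF d] by blast
      have "{dart_act g x, dart_act g y} = {x',y'}" using g by simp
      then show ?thesis using g(1) by blast
    next
      assume d: "(x,y) \<in> D" "(y',x') \<in> D"
      obtain g where g: "g \<in> G" "dart_act g x = y'" "dart_act g y = x'" using Dtrans[OF d] by blast
      have "{dart_act g x, dart_act g y} = {x',y'}" using g by (simp add: insert_commute)
      then show ?thesis using g(1) by blast
    next
      assume d: "(y,x) \<in> D" "(x',y') \<in> D"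
      obtain g where g: "g \<in> G" "dart_act g y = x'" "dart_act g x = y'" using Dtrans[OF d] by blast
      have "{dart_act g x, dart_act g y} = {x',y'}" using g by (simp add: insert_commute)
      then show ?thesis using g(1) by blast
    next
      assume d: "(y,x) \<in> D" "(y',x') \<in> D"
      obtain g where g: "g \<in> G" "dart_act g y = y'" "dart_act g x = x'" using Dtrans[OF d] by blast
      have "{dart_act g x, dart_act g y} = {x',y'}" using g by simp
      then show ?thesis using g(1) by blast
    qed
  qed
  show "\<not> (\<forall>x y x' y'. dart_adj E x y \<longrightarrow> dart_adj E x' y' \<longrightarrow> (\<exists>h\<in>dart_act ` G. h x = x' \<and> h y = y'))"
  proof
    assume A: "\<forall>x y x' y'. dart_adj E x y \<longrightarrow> dart_adj E x' y' \<longrightarrow> (\<exists>h\<in>dart_act ` G. h x = x' \<and> h y = y')"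
    obtain x y where xy: "(x,y) \<in> D" using D_exists[OF Vne] by blast
    have a1: "dart_adj E x y" and a2: "dart_adj E y x" using D_adj[OF xy] by auto
    have "\<exists>h\<in>dart_act ` G. h x = y \<and> h y = x" using A a1 a2 by presburger
    then obtain g where g: "g \<in> G" "dart_act g x = y" "dart_act g y = x" by blast
    have "(y,x) \<in> D" using Dpres[OF xy g(1)] g by simp
    then show False using D_antisym xy by blast
  qed
qed

end

theorem proposition2p2:
  fixes V :: "'a set" and E :: "'a \<Rightarrow> 'a \<Rightarrow> bool" and G :: "('a \<Rightarrow> 'a) set"
  assumes "simple_graph V E"
    and "connected_graph V E"
    and "regular_graph V E 3"
    and "aut_group V E G"
    and "two_arc_transitive E G"
  shows "regular_graph (darts E) (dart_adj E) 4
    \<and> half_arc_transitive (darts E) (dart_adj E) (dart_act ` G)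
    \<and> (\<forall>a\<in>arcs (dart_adj E).
         has_radius (darts E) (dart_adj E) (arc_orbit (dart_act ` G) a) 3
       \<and> has_attachment (darts E) (dart_adj E) (arc_orbit (dart_act ` G) a) 2
       \<and> graph_iso (alt_vertices (darts E) (dart_adj E) (arc_orbit (dart_act ` G) a))
                   (alt_adj (darts E) (dart_adj E) (arc_orbit (dart_act ` G) a)) V E)
    \<and> (\<exists>a\<in>arcs (dart_adj E). natural_orientation E = arc_orbit (dart_act ` G) a)"
proof -
  interpret cubic_grp V E G using assms by unfold_locales
  have Vne: "V \<noteq> {}" using assms(2) unfolding connected_graph_def by blast
  have P3: "\<forall>a\<in>arcs (dart_adj E).
         has_radius (darts E) (dart_adj E) (arc_orbit (dart_act ` G) a) 3
       \<and> has_attachment (darts E) (dart_adj E) (arc_orbit (dart_act ` G) a) 2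
       \<and> graph_iso (alt_vertices (darts E) (dart_adj E) (arc_orbit (dart_act ` G) a))
                   (alt_adj (darts E) (dart_adj E) (arc_orbit (dart_act ` G) a)) V E"
  proof
    fix a assume "a \<in> arcs (dart_adj E)"
    then have "arc_orbit (dart_act ` G) a = D \<or> arc_orbit (dart_act ` G) a = converse D" using orbit_cases by blast
    then show "has_radius (darts E) (dart_adj E) (arc_orbit (dart_act ` G) a) 3
       \<and> has_attachment (darts E) (dart_adj E) (arc_orbit (dart_act ` G) a) 2
       \<and> graph_iso (alt_vertices (darts E) (dart_adj E) (arc_orbit (dart_act ` G) a))
                   (alt_adj (darts E) (dart_adj E) (arc_orbit (dart_act ` G) a)) V E"
      using radius[OF Vne] attach iso by (auto simp: conv_props)
  qed
  have P4: "\<exists>a\<in>arcs (dart_adj E). natural_orientation E = arc_orbit (dart_act ` G) a"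
  proof -
    obtain x y where xy: "(x,y) \<in> D" using D_exists[OF Vne] by blast
    have "(x,y) \<in> arcs (dart_adj E)" using D_adj[OF xy] unfolding arcs_def by simp
    then show ?thesis using orbit[OF xy] by metis
  qed
  show ?thesis using reg4 half[OF Vne] P3 P4 by blast
qed

end
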